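(* Let $n\geq 2$. Then $T\cap S_{n-1}=\{\mathrm{id}\}$, and for every $2\leq i\leq n$, $$T\cap \big(S_{n-1}(1,i)\big)=\{C_{m_1}\cdots C_{m_{i-1}}\ |\ 2\leq m_1<\dots<m_{i-1}\leq n\}.$$
   Context: Permutations in $S_n$ are composed right-to-left: $(\sigma\tau)(k)=\sigma(\tau(k))$. $S_{n-1}\subset S_n$ denotes the subgroup of permutations $\tau$ with $\tau(1)=1$, and $S_{n-1}(1,i)=\{\tau\cdot(1,i):\tau\in S_{n-1}\}$, where $(1,i)$ is a transposition. For $m\geq 2$, $C_m$ denotes the cyclic permutation $(1,m,m-1,\dots,2)$ (i.e. $1\mapsto m\mapsto m-1\mapsto\dots\mapsto 2\mapsto 1$). $T\subset S_n$ is defined as $T:=\{\mathrm{id}\}\cup\bigcup_{i=1}^{n-1}\{C_{m_1}\cdots C_{m_i}\ |\ 2\leq m_1<\dots<m_i\leq n\}$. *)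

theory Defs
  imports "HOL-Combinatorics.Combinatorics"
begin

text \<open>Permutations of S_n are functions nat => nat that permute {1..n}
  (identity outside). Composition is right-to-left: (s o t) k = s (t k).\<close>

definition Cyc :: "nat \<Rightarrow> nat \<Rightarrow> nat" where
  "Cyc m = (\<lambda>k. if k = 1 then m else if 2 \<le> k \<and> k \<le> m then k - 1 else k)"

definition cyc_prod :: "nat list \<Rightarrow> nat \<Rightarrow> nat" where
  "cyc_prod ms = foldr (\<circ>) (map Cyc ms) id"

definition cyc_prods :: "nat \<Rightarrow> nat \<Rightarrow> (nat \<Rightarrow> nat) set" where
  "cyc_prods n i = {cyc_prod ms | ms. length ms = i \<and> sorted_wrt (<) ms \<and> set ms \<subseteq> {2..n}}"

definition Tset :: "nat \<Rightarrow> (nat \<Rightarrow> nat) set" where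
  "Tset n = {id} \<union> (\<Union>i\<in>{1..n-1}. cyc_prods n i)"

definition Ssub :: "nat \<Rightarrow> (nat \<Rightarrow> nat) set" where
  "Ssub n = {\<tau>. \<tau> permutes {1..n} \<and> \<tau> 1 = 1}"

definition Scoset :: "nat \<Rightarrow> nat \<Rightarrow> (nat \<Rightarrow> nat) set" where
  "Scoset n i = {\<tau> \<circ> Transposition.transpose 1 i | \<tau>. \<tau> \<in> Ssub n}"

end

theory Submission
  imports Defs
begin

lemma Cyc_permutes:
  assumes "1 \<le> m" shows "Cyc m permutes {1..m}"
proof (rule bij_imp_permutes)
  show "\<And>x. x \<notin> {1..m} \<Longrightarrow> Cyc m x = x" using assms by (auto simp: Cyc_def)
  show "bij_betw (Cyc m) {1..m} {1..m}"
  proof (rule bij_betw_byWitness[where f'="\<lambda>k. if k = m then 1 else k + 1"])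
    show "\<forall>a\<in>{1..m}. (if Cyc m a = m then 1 else Cyc m a + 1) = a"
      using assms by (auto simp: Cyc_def)
    show "\<forall>a'\<in>{1..m}. Cyc m (if a' = m then 1 else a' + 1) = a'"
      using assms by (auto simp: Cyc_def)
    show "Cyc m ` {1..m} \<subseteq> {1..m}" using assms by (auto simp: Cyc_def)
    show "(\<lambda>k. if k = m then 1 else k + 1) ` {1..m} \<subseteq> {1..m}" using assms by auto
  qed
qed

lemma cyc_prod_Cons: "cyc_prod (m # ms) = Cyc m \<circ> cyc_prod ms"
  by (simp add: cyc_prod_def)

lemma cyc_prod_snoc: "cyc_prod (ms @ [m]) = cyc_prod ms \<circ> Cyc m"
  by (induction ms) (auto simp: cyc_prod_def)

lemma cyc_prod_permutes:
  assumes "set ms \<subseteq> {2..n}" shows "cyc_prod ms permutes {1..n}"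
  using assms
proof (induction ms)
  case Nil then show ?case using permutes_id by (simp add: cyc_prod_def id_def)
next
  case (Cons m ms)
  have "Cyc m permutes {1..m}" using Cons.prems by (intro Cyc_permutes) auto
  then have "Cyc m permutes {1..n}"
    by (rule permutes_subset) (use Cons.prems in auto)
  moreover have "cyc_prod ms permutes {1..n}" using Cons by auto
  ultimately show ?case unfolding cyc_prod_Cons by (rule permutes_compose[rotated])
qed

lemma sorted_lower:
  assumes "sorted_wrt (<) (xs::nat list)" "\<forall>x\<in>set xs. a \<le> x" "k < length xs"
  shows "a + k \<le> xs ! k"
  using assms
proof (induction xs arbitrary: a k)
  case Nil then show ?case by simp
next
  case (Cons x xs)
  show ?case
  proof (cases k)
    case 0 then show ?thesis using Cons by simp
  next
    case (Suc j)
    have "\<forall>y\<in>set xs. Suc a \<le> y" using Cons.prems by auto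
    then have "Suc a + j \<le> xs ! j" using Cons.IH[of "Suc a" j] Cons.prems Suc by auto
    then show ?thesis using Suc by simp
  qed
qed

lemma cyc_prod_hit:
  assumes "sorted_wrt (<) ms" "\<forall>x\<in>set ms. 2 \<le> x"
  shows "cyc_prod ms (length ms + 1) = 1"
  using assms
proof (induction ms rule: rev_induct)
  case Nil then show ?case by (simp add: cyc_prod_def)
next
  case (snoc m ms)
  have "2 + length ms \<le> (ms @ [m]) ! length ms"
    by (rule sorted_lower) (use snoc.prems in auto)
  then have "m \<ge> length ms + 2" by simp
  then have "Cyc m (length (ms @ [m]) + 1) = length ms + 1" by (simp add: Cyc_def)
  moreover have "cyc_prod ms (length ms + 1) = 1"
    using snoc by (auto simp: sorted_wrt_append)
  ultimately show ?case by (simp add: cyc_prod_snoc)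
qed

lemma Scoset_iff:
  assumes "i \<in> {1..n}"
  shows "\<sigma> \<in> Scoset n i \<longleftrightarrow> \<sigma> permutes {1..n} \<and> \<sigma> i = 1"
proof -
  let ?t = "Transposition.transpose 1 i"
  have tp: "?t permutes {1..n}" using assms by (intro permutes_swap_id) auto
  have tt: "?t \<circ> ?t = id" by (rule ext) (simp add: Transposition.transpose_def)
  show ?thesis
  proof
    assume "\<sigma> \<in> Scoset n i"
    then obtain \<tau> where "\<sigma> = \<tau> \<circ> ?t" "\<tau> permutes {1..n}" "\<tau> 1 = 1"
      by (auto simp: Scoset_def Ssub_def)
    then show "\<sigma> permutes {1..n} \<and> \<sigma> i = 1"
      using tp by (auto intro: permutes_compose)
  next
    assume a: "\<sigma> permutes {1..n} \<and> \<sigma> i = 1"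
    have "\<sigma> = (\<sigma> \<circ> ?t) \<circ> ?t" using tt by (simp add: comp_assoc)
    moreover have "\<sigma> \<circ> ?t \<in> Ssub n" using a tp by (auto simp: Ssub_def intro: permutes_compose)
    ultimately show "\<sigma> \<in> Scoset n i" unfolding Scoset_def by blast
  qed
qed

lemma cyc_prods_facts:
  assumes "\<sigma> \<in> cyc_prods n j"
  shows "\<sigma> permutes {1..n} \<and> \<sigma> (j + 1) = 1"
proof -
  obtain ms where "\<sigma> = cyc_prod ms" "length ms = j" "sorted_wrt (<) ms" "set ms \<subseteq> {2..n}"
    using assms by (auto simp: cyc_prods_def)
  then show ?thesis using cyc_prod_permutes cyc_prod_hit by fastforce
qed

theorem lemma3p3:
  fixes n :: nat
  assumes "n \<ge> 2"
  shows "Tset n \<inter> Ssub n = {id} \<and>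
         (\<forall>i\<in>{2..n}. Tset n \<inter> Scoset n i = cyc_prods n (i - 1))"
proof
  show "Tset n \<inter> Ssub n = {id}"
  proof
    show "{id} \<subseteq> Tset n \<inter> Ssub n" by (auto simp: Tset_def Ssub_def permutes_id)
    show "Tset n \<inter> Ssub n \<subseteq> {id}"
    proof
      fix \<sigma> assume s: "\<sigma> \<in> Tset n \<inter> Ssub n"
      show "\<sigma> \<in> {id}"
      proof (rule ccontr)
        assume "\<sigma> \<notin> {id}"
        then obtain j where j: "j \<in> {1..n-1}" "\<sigma> \<in> cyc_prods n j" using s by (auto simp: Tset_def)
        then have "\<sigma> permutes {1..n}" "\<sigma> (j+1) = 1" using cyc_prods_facts by blast+
        moreover have "\<sigma> 1 = 1" using s by (auto simp: Ssub_def)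
        ultimately show False using j permutes_inj[of \<sigma>] by (metis add_left_cancel atLeastAtMost_iff injD le_add2 not_one_le_zero add_0 Suc_eq_plus1 Suc_le_lessD less_numeral_extra(3) add.commute)
      qed
    qed
  qed
next
  show "\<forall>i\<in>{2..n}. Tset n \<inter> Scoset n i = cyc_prods n (i - 1)"
  proof
    fix i assume i: "i \<in> {2..n}"
    then have ii: "i \<in> {1..n}" by auto
    show "Tset n \<inter> Scoset n i = cyc_prods n (i - 1)"
    proof
      show "cyc_prods n (i - 1) \<subseteq> Tset n \<inter> Scoset n i"
      proof
        fix \<sigma> assume s: "\<sigma> \<in> cyc_prods n (i - 1)"
        have "\<sigma> \<in> Tset n" unfolding Tset_def by (rule UnI2, rule UN_I[of "i-1"]) (use s i in auto)
        moreover have "\<sigma> \<in> Scoset n i" using cyc_prods_facts[OF s] i Scoset_iff[OF ii] by auto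
        ultimately show "\<sigma> \<in> Tset n \<inter> Scoset n i" by blast
      qed
      show "Tset n \<inter> Scoset n i \<subseteq> cyc_prods n (i - 1)"
      proof
        fix \<sigma> assume s: "\<sigma> \<in> Tset n \<inter> Scoset n i"
        then have sc: "\<sigma> permutes {1..n}" "\<sigma> i = 1" using Scoset_iff[OF ii] by auto
        have "\<sigma> \<noteq> id" using sc i by auto
        then obtain j where j: "\<sigma> \<in> cyc_prods n j" using s by (auto simp: Tset_def)
        then have "\<sigma> (j+1) = 1" using cyc_prods_facts by blast
        then have "j + 1 = i" using sc permutes_inj[OF sc(1)] by (metis injD)
        then show "\<sigma> \<in> cyc_prods n (i - 1)" using j by auto
      qed
    qed
  qed
qed

end
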